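(* Let $N\ge2$ and $r\ge1$ be integers, let $\mathbf z=(z_1,\dots,z_r)\in\mathbb C^r$ with $|z_i|\le1$ for all $i$ and $z_1\ne0$, and let $(s_1,\dots,s_r)\in U_r$. Then for $r=1$, $$\Big(1-\frac1{z_1}\Big)\mathrm{Li}^\star_{(z_1)}(s_1-1)_{\ge N}+\frac{z_1^{N-1}}{N^{s_1-1}}=\sum_{k\ge0}(-1)^k\frac{(s_1-1)_{k+1}}{(k+1)!}\mathrm{Li}^\star_{(z_1)}(s_1+k)_{\ge N},$$ and for $r>1$, $$\Big(1-\frac1{z_1}\Big)\mathrm{Li}^\star_{\mathbf z}(s_1-1,s_2,\dots,s_r)_{\ge N}+\frac1{z_1}\mathrm{Li}^\star_{(z_1z_2,z_3,\dots,z_r)}(s_1+s_2-1,s_3,\dots,s_r)_{\ge N}=\sum_{k\ge0}(-1)^k\frac{(s_1-1)_{k+1}}{(k+1)!}\mathrm{Li}^\star_{\mathbf z}(s_1+k,s_2,\dots,s_r)_{\ge N}.$$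
   Context: $U_r:=\{(s_1,\dots,s_r)\in\mathbb C^r:\Re(s_1+\cdots+s_i)>i\text{ for all }1\le i\le r\}$. For $|w_i|\le1$, the tail of the multiple polylogarithm-star function is $\mathrm{Li}^\star_{(w_1,\dots,w_d)}(s_1,\dots,s_d)_{\ge N}:=\sum_{n_1\ge n_2\ge\cdots\ge n_d\ge N}\frac{w_1^{n_1}\cdots w_d^{n_d}}{n_1^{s_1}\cdots n_d^{s_d}}$. The first term on the left-hand side is taken to be $0$ when $z_1=1$; when $z_1\ne1$ the series defining $\mathrm{Li}^\star_{\mathbf z}(s_1-1,s_2,\dots,s_r)_{\ge N}$ converges. $(s)_k=s(s+1)\cdots(s+k-1)$ is the Pochhammer symbol. *)

theory Defs
  imports "HOL-Analysis.Analysis"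
begin

text \<open>The argument list of LiStar_rev is the list of pairs (w_i, s_i) in REVERSED order
  (i.e. (w_d,s_d) first), so that the outermost summation runs over n_d >= N and the
  innermost over n_1 >= n_2:
  sum over n_d >= N of w_d^n_d / n_d^s_d times (sum over n_(d-1) >= n_d of ... ).\<close>

fun LiStar_rev :: "(complex \<times> complex) list \<Rightarrow> nat \<Rightarrow> complex" where
  "LiStar_rev [] N = 1"
| "LiStar_rev ((w, s) # xs) N =
     (\<Sum>n. w ^ (n + N) / (of_nat (n + N)) powr s * LiStar_rev xs (n + N))"

text \<open>LiStar ws ss N = Li^star_(w_1,...,w_d)(s_1,...,s_d)_{>= N}
  = sum over n_1 >= ... >= n_d >= N of prod_i w_i^n_i / n_i^s_i.\<close>
definition LiStar :: "complex list \<Rightarrow> complex list \<Rightarrow> nat \<Rightarrow> complex" where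
  "LiStar ws ss N = LiStar_rev (rev (zip ws ss)) N"

definition U_dom :: "complex list \<Rightarrow> bool" where
  "U_dom s \<longleftrightarrow> (\<forall>i. 1 \<le> i \<and> i \<le> length s \<longrightarrow> Re (\<Sum>j<i. s ! j) > real i)"

end

theory Submission
  imports Defs "HOL-Real_Asymp.Real_Asymp"
begin

lemma FUB:
  fixes v :: "nat \<Rightarrow> nat \<Rightarrow> 'a::{banach,second_countable_topology}"
  assumes A1: "\<And>i. summable (\<lambda>j. norm (v i j))" and A2: "summable (\<lambda>i. \<Sum>j. norm (v i j))"
  shows "(\<lambda>j. \<Sum>i. v i j) sums (\<Sum>i. \<Sum>j. v i j)" and "\<And>j. summable (\<lambda>i. norm (v i j))"
proof -
  have inf1: "infsum (\<lambda>j. norm (v i j)) UNIV = (\<Sum>j. norm (v i j))" for i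
    by (intro infsumI sums_nonneg_imp_has_sum summable_sums A1) simp
  have "(\<lambda>p. norm ((\<lambda>(i,j). v i j) p)) summable_on Sigma UNIV (\<lambda>_. UNIV)"
    apply (rule Infinite_Sum.abs_summable_on_Sigma_iff[where f="\<lambda>(i,j). v i j" and A=UNIV and B="\<lambda>_. UNIV", THEN iffD2])
    using A1 A2 by (auto simp: inf1 summable_on_UNIV_nonneg_real_iff suminf_nonneg)
  then have sm: "(\<lambda>(i,j). v i j) summable_on UNIV \<times> UNIV"
    using abs_summable_summable by auto
  then have sw: "(\<lambda>(j,i). v i j) summable_on UNIV \<times> UNIV"
    using summable_on_swap[where f="\<lambda>(i,j). v i j" and A=UNIV and B=UNIV] by (simp add: case_prod_unfold)
  have col: "summable (\<lambda>i. norm (v i j))" for j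
  proof (rule summable_comparison_test'[OF A2])
    fix i show "norm (norm (v i j)) \<le> (\<Sum>j. norm (v i j))"
      using sum_le_suminf[OF A1[of i], of "{j}"] by simp
  qed
  have e1: "infsum (\<lambda>i. v i j) UNIV = (\<Sum>i. v i j)" for j
    by (intro infsumI norm_summable_imp_has_sum col summable_sums summable_norm_cancel)
  have row: "summable (\<lambda>i. norm (\<Sum>j. v i j))"
    by (rule summable_comparison_test'[OF A2]) (simp add: summable_norm A1)
  have e2: "infsum (\<lambda>j. v i j) UNIV = (\<Sum>j. v i j)" for i
    by (intro infsumI norm_summable_imp_has_sum A1 summable_sums summable_norm_cancel)
  have e3: "infsum (\<lambda>i. \<Sum>j. v i j) UNIV = (\<Sum>i. \<Sum>j. v i j)"
    by (intro infsumI norm_summable_imp_has_sum row summable_sums summable_norm_cancel)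
  have "(\<lambda>j. infsum (\<lambda>i. v i j) UNIV) summable_on UNIV"
    using summable_on_Sigma_banach[of "\<lambda>j i. v i j" UNIV "\<lambda>_. UNIV"] sw by simp
  then have "((\<lambda>j. \<Sum>i. v i j) has_sum infsum (\<lambda>j. infsum (\<lambda>i. v i j) UNIV) UNIV) UNIV"
    unfolding e1 by (simp add: has_sum_infsum)
  moreover have "infsum (\<lambda>j. infsum (\<lambda>i. v i j) UNIV) UNIV = (\<Sum>i. \<Sum>j. v i j)"
    using infsum_swap_banach[of "\<lambda>i j. v i j" UNIV UNIV] sm e2 e3 by simp
  ultimately show "(\<lambda>j. \<Sum>i. v i j) sums (\<Sum>i. \<Sum>j. v i j)" using has_sum_imp_sums by metis
  show "\<And>j. summable (\<lambda>i. norm (v i j))" by (rule col)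
qed

lemma TEL:
  fixes x \<sigma> :: real assumes x: "x \<ge> 1" and s: "\<sigma> > 1"
  shows "(\<sigma>-1) * (x+1) powr (-\<sigma>) \<le> x powr (1-\<sigma>) - (x+1) powr (1-\<sigma>)"
proof -
  define y where "y = x/(x+1)"
  have y0: "y > 0" and y1: "y < 1" using x by (auto simp: y_def field_simps)
  have xy: "x = y * (x+1)" using x by (simp add: y_def field_simps)
  have "x powr (1-\<sigma>) = y powr (1-\<sigma>) * (x+1) powr (1-\<sigma>)"
    by (subst xy) (simp add: powr_mult)
  moreover have "y powr (1-\<sigma>) \<ge> 1 + (\<sigma>-1) * (1-y)"
  proof -
    have "y powr (1-\<sigma>) = exp ((1-\<sigma>) * ln y)" using y0 by (simp add: powr_def)
    also have "\<dots> \<ge> 1 + (1-\<sigma>) * ln y" by simp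
    finally have a: "y powr (1-\<sigma>) \<ge> 1 + (1-\<sigma>) * ln y" .
    have "ln y \<le> y - 1" using ln_le_minus_one y0 by simp
    then have "(1-\<sigma>) * ln y \<ge> (1-\<sigma>) * (y-1)" using s by (intro mult_left_mono_neg) auto
    then show ?thesis using a by (simp add: algebra_simps)
  qed
  moreover have "1 - y = 1/(x+1)" using x by (simp add: y_def field_simps)
  moreover have "(x+1) powr (1-\<sigma>) / (x+1) = (x+1) powr (-\<sigma>)"
  proof -
    have "(x+1) powr (1 + (-\<sigma>)) = (x+1) powr 1 * (x+1) powr (-\<sigma>)" by (rule powr_add)
    then show ?thesis using x by simp
  qed
  moreover have "(x+1) powr (1-\<sigma>) \<ge> 0" by simp
  ultimately show ?thesis
  proof -
    assume e: "x powr (1-\<sigma>) = y powr (1-\<sigma>) * (x+1) powr (1-\<sigma>)"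
      and i: "y powr (1-\<sigma>) \<ge> 1 + (\<sigma>-1) * (1-y)" and h: "1 - y = 1/(x+1)"
      and q: "(x+1) powr (1-\<sigma>) / (x+1) = (x+1) powr (-\<sigma>)" and p: "(x+1) powr (1-\<sigma>) \<ge> 0"
    have "x powr (1-\<sigma>) - (x+1) powr (1-\<sigma>) = (y powr (1-\<sigma>) - 1) * (x+1) powr (1-\<sigma>)"
      by (simp add: e algebra_simps)
    also have "\<dots> \<ge> ((\<sigma>-1) * (1-y)) * (x+1) powr (1-\<sigma>)"
      using i p by (intro mult_right_mono) auto
    also have "((\<sigma>-1) * (1-y)) * (x+1) powr (1-\<sigma>) = (\<sigma>-1) * ((x+1) powr (1-\<sigma>) / (x+1))"
      by (simp add: h)
    finally show ?thesis using q by simp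
  qed
qed

lemma ZB:
  fixes \<sigma> :: real and m :: nat assumes s: "\<sigma> > 1" and m: "m \<ge> 2"
  shows "summable (\<lambda>n. real (n+m) powr (-\<sigma>)) \<and>
         (\<Sum>n. real (n+m) powr (-\<sigma>)) \<le> (2 powr (\<sigma>-1) / (\<sigma>-1)) * real m powr (1-\<sigma>)"
proof -
  define f where "f n = (real n + real m - 1) powr (1-\<sigma>) / (\<sigma>-1)" for n
  have lim: "f \<longlonglongrightarrow> 0"
  proof -
    have "filterlim (\<lambda>n::nat. real n + real m - 1) at_top sequentially" by real_asymp
    then have "(\<lambda>n. (real n + real m - 1) powr (1-\<sigma>)) \<longlonglongrightarrow> 0"
      using s by (intro tendsto_neg_powr) auto
    then show ?thesis unfolding f_def by (intro tendsto_divide_zero)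
  qed
  have t: "(\<lambda>n. f n - f (Suc n)) sums (f 0 - 0)" by (rule telescope_sums'[OF lim])
  have b: "real (n+m) powr (-\<sigma>) \<le> f n - f (Suc n)" for n
  proof -
    have e: "f n - f (Suc n) = ((real n + real m - 1) powr (1-\<sigma>) - (real n + real m) powr (1-\<sigma>)) / (\<sigma>-1)"
      by (simp add: f_def diff_divide_distrib)
    have "(\<sigma>-1) * (real n + real m) powr (-\<sigma>) \<le> (real n + real m - 1) powr (1-\<sigma>) - (real n + real m) powr (1-\<sigma>)"
      using TEL[of "real n + real m - 1" \<sigma>] m s by simp
    then show ?thesis using s by (simp add: e pos_le_divide_eq mult.commute add.commute)
  qed
  have sm: "summable (\<lambda>n. real (n+m) powr (-\<sigma>))"
    by (rule summable_comparison_test'[OF sums_summable[OF t]]) (use b in auto)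
  have "(\<Sum>n. real (n+m) powr (-\<sigma>)) \<le> f 0"
    using suminf_le[OF b sm sums_summable[OF t]] sums_unique[OF t] by simp
  also have "f 0 = (real m - 1) powr (1-\<sigma>) / (\<sigma>-1)" by (simp add: f_def)
  also have "\<dots> \<le> (real m / 2) powr (1-\<sigma>) / (\<sigma>-1)"
    using m s by (intro divide_right_mono powr_mono2') auto
  also have "(real m / 2) powr (1-\<sigma>) = 2 powr (\<sigma>-1) * real m powr (1-\<sigma>)"
  proof -
    have "2 powr (\<sigma>-1) = 1 / 2 powr (1-\<sigma>)" using powr_minus_divide[of 2 "1-\<sigma>"] by simp
    then show ?thesis by (simp add: powr_divide)
  qed
  finally show ?thesis using sm by simp
qed

fun Lg :: "(complex \<times> complex) list \<Rightarrow> (nat \<Rightarrow> complex) \<Rightarrow> nat \<Rightarrow> complex" where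
  "Lg [] g m = g m"
| "Lg ((w,s)#xs) g m = (\<Sum>n. w^(n+m) / (of_nat (n+m)) powr s * Lg xs g (n+m))"

fun sR :: "(complex \<times> complex) list \<Rightarrow> real" where
  "sR [] = 0"
| "sR ((w,s)#xs) = Re s + sR xs"

fun Q :: "real \<Rightarrow> (complex \<times> complex) list \<Rightarrow> bool" where
  "Q e [] = True"
| "Q e ((w,s)#xs) = (Q e xs \<and> e + Re s + sR xs - real (length xs) > 1)"

lemma Lg_append: "Lg (xs @ ys) g m = Lg xs (Lg ys g) m"
  by (induction xs arbitrary: m) auto

lemma LiStar_rev_append: "LiStar_rev (xs @ [(w,s)]) m = Lg xs (LiStar_rev [(w,s)]) m"
  by (induction xs arbitrary: m) auto

lemma Lg_cong: "(\<And>p. p \<ge> m \<Longrightarrow> f p = h p) \<Longrightarrow> Lg xs f m = Lg xs h m"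
proof (induction xs arbitrary: m)
  case Nil then show ?case by simp
next
  case (Cons x xs)
  obtain w s where x: "x = (w,s)" by fastforce
  have "Lg xs f (n+m) = Lg xs h (n+m)" for n by (rule Cons.IH) (use Cons.prems in auto)
  then show ?case by (simp add: x)
qed

lemma Lg_zero: "Lg xs (\<lambda>p. 0) m = 0"
  by (induction xs arbitrary: m) auto

lemma term_bound:
  assumes "norm w \<le> 1" "k \<ge> 1"
  shows "norm (w^k / (of_nat k) powr s) \<le> real k powr (- Re s)"
proof -
  have n: "norm ((of_nat k :: complex) powr s) = real k powr Re s"
    by (subst norm_powr_real_powr) auto
  have "norm (w^k) \<le> 1" using assms by (simp add: norm_power power_le_one)
  then have "norm (w^k / (of_nat k) powr s) \<le> 1 / real k powr Re s"
    by (simp add: norm_divide n divide_right_mono)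
  also have "\<dots> = real k powr (- Re s)" by (simp add: powr_minus_divide)
  finally show ?thesis .
qed

lemma LX:
  assumes "\<forall>p\<in>set xs. norm (fst p) \<le> 1" "Q e xs"
    and g1: "\<And>m. m \<ge> 2 \<Longrightarrow> summable (\<lambda>k. norm (g k m))"
    and g2: "\<And>m. m \<ge> 2 \<Longrightarrow> (\<Sum>k. norm (g k m)) \<le> C * real m powr (-e)"
  shows "\<exists>C'. \<forall>m\<ge>2. (\<lambda>k. Lg xs (g k) m) sums Lg xs (\<lambda>p. \<Sum>k. g k p) m
     \<and> summable (\<lambda>k. norm (Lg xs (g k) m))
     \<and> (\<Sum>k. norm (Lg xs (g k) m)) \<le> C' * real m powr (-(e + sR xs - real (length xs)))"
  using assms(1,2)
proof (induction xs)
  case Nil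
  show ?case
  proof (intro exI[of _ C] allI impI conjI)
    fix m :: nat assume m: "m \<ge> 2"
    show "(\<lambda>k. Lg [] (g k) m) sums Lg [] (\<lambda>p. \<Sum>k. g k p) m"
      using g1[OF m] by (simp add: summable_sums summable_norm_cancel)
  qed (use g1 g2 in auto)
next
  case (Cons x ys)
  obtain w s where x: "x = (w,s)" by fastforce
  have w1: "norm w \<le> 1" using Cons.prems x by auto
  have Qys: "Q e ys" and sg: "e + Re s + sR ys - real (length ys) > 1" using Cons.prems x by auto
  obtain C1 where C1: "\<forall>m\<ge>2. (\<lambda>k. Lg ys (g k) m) sums Lg ys (\<lambda>p. \<Sum>k. g k p) m
     \<and> summable (\<lambda>k. norm (Lg ys (g k) m))
     \<and> (\<Sum>k. norm (Lg ys (g k) m)) \<le> C1 * real m powr (-(e + sR ys - real (length ys)))"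
    using Cons.IH Cons.prems Qys by auto
  define e1 where "e1 = e + sR ys - real (length ys)"
  define \<sigma> where "\<sigma> = Re s + e1"
  have s1: "\<sigma> > 1" using sg by (simp add: \<sigma>_def e1_def)
  define C2 where "C2 = max C1 0"
  define K where "K = 2 powr (\<sigma>-1) / (\<sigma>-1)"
  show ?case
  proof (intro exI[of _ "C2 * K"] allI impI)
    fix m :: nat assume m: "m \<ge> 2"
    define a where "a n = w^(n+m) / (of_nat (n+m)) powr s" for n
    define u where "u n k = a n * Lg ys (g k) (n+m)" for n k
    have an: "norm (a n) \<le> real (n+m) powr (- Re s)" for n
      unfolding a_def by (rule term_bound) (use w1 m in auto)
    have IHn: "(\<lambda>k. Lg ys (g k) (n+m)) sums Lg ys (\<lambda>p. \<Sum>k. g k p) (n+m)"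
        "summable (\<lambda>k. norm (Lg ys (g k) (n+m)))"
        "(\<Sum>k. norm (Lg ys (g k) (n+m))) \<le> C1 * real (n+m) powr (- e1)" for n
      using C1[rule_format, of "n+m"] m unfolding e1_def by auto
    have A1: "summable (\<lambda>k. norm (u n k))" for n
      unfolding u_def norm_mult by (intro summable_mult IHn)
    have rowb: "(\<Sum>k. norm (u n k)) \<le> C2 * real (n+m) powr (-\<sigma>)" for n
    proof -
      have "(\<Sum>k. norm (u n k)) = norm (a n) * (\<Sum>k. norm (Lg ys (g k) (n+m)))"
        unfolding u_def norm_mult by (intro suminf_mult IHn)
      also have "\<dots> \<le> real (n+m) powr (- Re s) * (C2 * real (n+m) powr (- e1))"
      proof (intro mult_mono an)
        show "(\<Sum>k. norm (Lg ys (g k) (n+m))) \<le> C2 * real (n+m) powr (- e1)"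
          using IHn(3)[of n] by (rule order_trans) (simp add: C2_def mult_right_mono)
      qed (auto intro: suminf_nonneg IHn)
      also have "\<dots> = C2 * real (n+m) powr (-\<sigma>)"
        by (simp add: \<sigma>_def powr_add[symmetric] algebra_simps)
      finally show ?thesis .
    qed
    have ZBm: "summable (\<lambda>n. real (n+m) powr (-\<sigma>))" "(\<Sum>n. real (n+m) powr (-\<sigma>)) \<le> K * real m powr (1-\<sigma>)"
      using ZB[OF s1 m] by (auto simp: K_def)
    have nn: "0 \<le> (\<Sum>k. norm (u n k))" for n by (intro suminf_nonneg A1) simp
    have A2: "summable (\<lambda>n. \<Sum>k. norm (u n k))"
      by (rule summable_comparison_test'[where g="\<lambda>n. C2 * real (n+m) powr (-\<sigma>)"])
         (use rowb ZBm in \<open>auto simp: abs_of_nonneg[OF nn] intro!: summable_mult\<close>)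
    have F: "(\<lambda>k. \<Sum>n. u n k) sums (\<Sum>n. \<Sum>k. u n k)" "\<And>k. summable (\<lambda>n. norm (u n k))"
      using FUB[of u, OF A1 A2] by auto
    have eq1: "(\<Sum>n. u n k) = Lg (x#ys) (g k) m" for k
      by (simp add: x u_def a_def)
    have eq2: "(\<Sum>n. \<Sum>k. u n k) = Lg (x#ys) (\<lambda>p. \<Sum>k. g k p) m"
    proof -
      have "(\<Sum>k. u n k) = a n * Lg ys (\<lambda>p. \<Sum>k. g k p) (n+m)" for n
        unfolding u_def using IHn(1)[of n] by (simp add: sums_iff suminf_mult)
      then show ?thesis by (simp add: x a_def)
    qed
    show "(\<lambda>k. Lg (x#ys) (g k) m) sums Lg (x#ys) (\<lambda>p. \<Sum>k. g k p) m
     \<and> summable (\<lambda>k. norm (Lg (x#ys) (g k) m))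
     \<and> (\<Sum>k. norm (Lg (x#ys) (g k) m)) \<le> C2 * K * real m powr (-(e + sR (x#ys) - real (length (x#ys))))"
    proof (intro conjI)
      show "(\<lambda>k. Lg (x#ys) (g k) m) sums Lg (x#ys) (\<lambda>p. \<Sum>k. g k p) m"
        using F(1) unfolding eq1 eq2 .
      have FN: "(\<lambda>k. \<Sum>n. norm (u n k)) sums (\<Sum>n. \<Sum>k. norm (norm (u n k)))"
        using FUB[of "\<lambda>n k. norm (u n k)"] A1 A2 by simp
      have le: "norm (Lg (x#ys) (g k) m) \<le> (\<Sum>n. norm (u n k))" for k
        unfolding eq1[symmetric] by (rule summable_norm[OF F(2)])
      show sm: "summable (\<lambda>k. norm (Lg (x#ys) (g k) m))"
        by (rule summable_comparison_test'[OF sums_summable[OF FN]]) (use le in simp)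
      have "(\<Sum>k. norm (Lg (x#ys) (g k) m)) \<le> (\<Sum>k. \<Sum>n. norm (u n k))"
        by (rule suminf_le[OF le sm sums_summable[OF FN]])
      also have "\<dots> = (\<Sum>n. \<Sum>k. norm (u n k))" using sums_unique[OF FN] by simp
      also have "\<dots> \<le> (\<Sum>n. C2 * real (n+m) powr (-\<sigma>))"
        by (rule suminf_le[OF rowb A2]) (use ZBm in \<open>auto intro: summable_mult\<close>)
      also have "\<dots> = C2 * (\<Sum>n. real (n+m) powr (-\<sigma>))" by (rule suminf_mult[OF ZBm(1)])
      also have "\<dots> \<le> C2 * (K * real m powr (1-\<sigma>))"
        by (rule mult_left_mono[OF ZBm(2)]) (simp add: C2_def)
      also have "1 - \<sigma> = -(e + sR (x#ys) - real (length (x#ys)))"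
        by (simp add: \<sigma>_def e1_def x)
      finally show "(\<Sum>k. norm (Lg (x#ys) (g k) m)) \<le> C2 * K * real m powr (-(e + sR (x#ys) - real (length (x#ys))))"
        by (simp add: mult.assoc)
    qed
  qed
qed

definition cc :: "complex \<Rightarrow> nat \<Rightarrow> complex" where
  "cc a k = (-1)^k * pochhammer (a - 1) (k+1) / fact (k+1)"

lemma cc_Suc: "cc a (Suc k) = cc a k * (- (a + of_nat k) / of_nat (k+2))"
proof -
  have p: "pochhammer (a-1) (Suc (k+1)) = pochhammer (a-1) (k+1) * (a + of_nat k)"
    by (simp add: pochhammer_Suc algebra_simps)
  have f: "(fact (Suc (k+1)) :: complex) = fact (k+1) * of_nat (k+2)"
    by (simp add: algebra_simps)
  show ?thesis unfolding cc_def using p f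
    by (simp add: field_simps del: fact_Suc pochhammer_Suc of_nat_Suc)
qed

lemma GAM: "summable (\<lambda>k. norm (cc a k) * (1/2)^k)"
proof (rule summable_ratio_test[where c="3/4" and N="nat \<lceil>2 * norm a\<rceil>"])
  fix k :: nat assume k: "k \<ge> nat \<lceil>2 * norm a\<rceil>"
  have na: "norm (a + of_nat k) \<le> norm a + real k"
    using norm_triangle_ineq[of a "of_nat k"] by simp
  have "norm a \<le> real k / 2" using k by linarith
  then have r: "(norm a + real k) / (2 * real (k+2)) \<le> 3/4" by (simp add: field_simps)
  have n1: "norm (- (a + of_nat k)) = norm (a + of_nat k)" by (rule norm_minus_cancel)
  have n2: "norm (of_nat (k+2) :: complex) = real (k+2)" by (rule norm_of_nat)
  have eq: "norm (cc a (Suc k)) = norm (cc a k) * (norm (a + of_nat k) / real (k+2))"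
    by (simp only: cc_Suc norm_mult norm_divide n1 n2)
  have "norm (norm (cc a (Suc k)) * (1/2)^(Suc k)) = norm (cc a (Suc k)) * ((1/2)^k * (1/2))"
    by simp
  also have "\<dots> = norm (cc a k) * (norm (a + of_nat k) / real (k+2)) * ((1/2)^k * (1/2))"
    by (simp only: eq)
  also have "\<dots> = norm (cc a k) * (1/2)^k * (norm (a + of_nat k) / (2 * real (k+2)))"
    by (simp add: mult_ac)
  finally have "norm (norm (cc a (Suc k)) * (1/2)^(Suc k)) = norm (cc a k) * (1/2)^k * (norm (a + of_nat k) / (2 * real (k+2)))" .
  also have "\<dots> \<le> norm (cc a k) * (1/2)^k * ((norm a + real k) / (2 * real (k+2)))"
    by (intro mult_left_mono divide_right_mono na) auto
  also have "\<dots> \<le> norm (cc a k) * (1/2)^k * (3/4)"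
    by (intro mult_left_mono r) auto
  finally show "norm (norm (cc a (Suc k)) * (1/2)^(Suc k)) \<le> 3/4 * norm (norm (cc a k) * (1/2)^k)"
    by (simp add: mult.commute)
qed simp

lemma BIN:
  fixes a :: complex and q :: nat assumes q: "q \<ge> 2"
  shows "(\<lambda>k. cc a k / (of_nat q) powr (a + of_nat k)) sums ((of_nat q) powr (1-a) - (of_nat q + 1) powr (1-a))"
proof -
  define T where "T n = ((1-a) gchoose n) * of_real 1 ^ n * of_real (real q) powr ((1-a) - of_nat n)" for n
  have s: "T sums (of_real (1 + real q) powr (1-a))"
    unfolding T_def by (rule gen_binomial_complex') (use q in auto)
  have T0: "T 0 = (of_nat q) powr (1-a)" by (simp add: T_def)
  have TS: "T (Suc k) = - (cc a k / (of_nat q) powr (a + of_nat k))" for k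
  proof -
    have g: "(1-a) gchoose (Suc k) = (-1)^(Suc k) * pochhammer (a-1) (Suc k) / fact (Suc k)"
      by (simp add: gbinomial_pochhammer)
    have e: "(1-a) - of_nat (Suc k) = - (a + of_nat k)" by simp
    show ?thesis unfolding T_def g e cc_def powr_minus_divide
      by simp
  qed
  have "(\<lambda>k. T (Suc k)) sums (of_real (1 + real q) powr (1-a) - T 0)"
    using s by (subst sums_Suc_iff) simp
  then have "(\<lambda>k. - T (Suc k)) sums (T 0 - of_real (1 + real q) powr (1-a))"
    using sums_minus by fastforce
  then show ?thesis unfolding TS T0 by (simp add: add.commute)
qed

lemma A_lim:
  fixes w a :: complex assumes "norm w \<le> 1" "Re a > 1" "p \<ge> 1"
  shows "(\<lambda>n. w^(n+p) * (of_nat (n+p)) powr (1-a)) \<longlonglongrightarrow> 0"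
proof -
  have b: "norm (w^(n+p) * (of_nat (n+p)) powr (1-a)) \<le> (real n + real p) powr (1 - Re a)" for n
  proof -
    have "norm (w^(n+p)) \<le> 1" using assms by (simp add: norm_power power_le_one)
    moreover have "norm ((of_nat (n+p) :: complex) powr (1-a)) = real (n+p) powr (1 - Re a)"
      by (subst norm_powr_real_powr) auto
    ultimately show ?thesis by (simp add: norm_mult mult_left_le_one_le)
  qed
  have "filterlim (\<lambda>n::nat. real n + real p) at_top sequentially" by real_asymp
  then have "(\<lambda>n. (real n + real p) powr (1 - Re a)) \<longlonglongrightarrow> 0"
    using assms by (intro tendsto_neg_powr) auto
  then show ?thesis
    by (rule Lim_null_comparison[rotated]) (use b in auto)
qed

lemma TELE:
  fixes w a X :: complex
  assumes w1: "norm w \<le> 1" and w0: "w \<noteq> 0" and a1: "Re a > 1" and p: "p \<ge> 1"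
    and S: "(\<lambda>n. w^(n+p) * ((of_nat (n+p)) powr (1-a) - (of_nat (n+p) + 1) powr (1-a))) sums X"
  shows "X = (1 - 1/w) * (if w = 1 then 0 else LiStar_rev [(w, a - 1)] p) + w^(p-1) / (of_nat p) powr (a - 1)"
proof -
  define A where "A n = w^(n+p) * (of_nat (n+p)) powr (1-a)" for n
  have Alim: "A \<longlonglongrightarrow> 0" unfolding A_def by (rule A_lim) (use assms in auto)
  have trm: "w^(n+p) * ((of_nat (n+p)) powr (1-a) - (of_nat (n+p) + 1) powr (1-a)) = A n - A (Suc n) / w" for n
    using w0 by (simp add: A_def algebra_simps)
  have last: "A 0 / w = w^(p-1) / (of_nat p) powr (a - 1)"
  proof -
    have "w^p = w * w^(p-1)" using p by (metis Suc_diff_1 less_le_trans power_Suc zero_less_one)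
    moreover have "(of_nat p :: complex) powr (1-a) = 1 / (of_nat p) powr (a-1)"
      using powr_minus_divide[of "of_nat p :: complex" "a-1"] by simp
    ultimately show ?thesis using w0 by (simp add: A_def)
  qed
  show ?thesis
  proof (cases "w = 1")
    case True
    have "(\<lambda>n. A n - A (Suc n)) sums (A 0 - 0)" by (rule telescope_sums'[OF Alim])
    moreover have "(\<lambda>n. A n - A (Suc n) / w) sums X" using S unfolding trm .
    ultimately have "X = A 0" using True by (simp add: sums_unique2)
    then show ?thesis using last True by simp
  next
    case False
    have part: "(\<Sum>n<M. A n - A (Suc n) / w) = (1 - 1/w) * (\<Sum>n<M. A n) + A 0 / w - A M / w" for M
      by (induction M) (simp_all add: field_simps)
    have P: "(\<lambda>M. \<Sum>n<M. A n - A (Suc n) / w) \<longlonglongrightarrow> X"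
      using S unfolding trm sums_def .
    have nz: "1 - 1/w \<noteq> 0" using False w0 by (simp add: field_simps)
    have eqS: "(\<Sum>n<M. A n) = ((\<Sum>n<M. A n - A (Suc n) / w) - A 0 / w + A M / w) / (1 - 1/w)" for M
      using nz by (simp add: part field_simps)
    have "(\<lambda>M. ((\<Sum>n<M. A n - A (Suc n) / w) - A 0 / w + A M / w) / (1 - 1/w)) \<longlonglongrightarrow> (X - A 0 / w + 0 / w) / (1 - 1/w)"
      by (intro tendsto_intros P Alim nz w0)
    then have "A sums ((X - A 0 / w) / (1 - 1/w))"
      unfolding sums_def eqS by simp
    moreover have "LiStar_rev [(w, a - 1)] p = (\<Sum>n. A n)"
    proof -
      have "w^(n+p) / (of_nat (n+p)) powr (a-1) = A n" for n
        using powr_minus_divide[of "of_nat (n+p) :: complex" "a-1"] by (simp add: A_def divide_inverse)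
      then show ?thesis by simp
    qed
    ultimately have "LiStar_rev [(w, a - 1)] p = (X - A 0 / w) / (1 - 1/w)" by (simp add: sums_iff)
    then have "X = (1 - 1/w) * LiStar_rev [(w, a - 1)] p + A 0 / w" using nz by (simp add: field_simps)
    then show ?thesis using last False by simp
  qed
qed

lemma ONE:
  fixes w a :: complex
  assumes w1: "norm w \<le> 1" and w0: "w \<noteq> 0" and a1: "Re a > 1"
  shows "\<exists>K. \<forall>p\<ge>2. summable (\<lambda>k. norm (cc a k * LiStar_rev [(w, a + of_nat k)] p))
     \<and> (\<Sum>k. norm (cc a k * LiStar_rev [(w, a + of_nat k)] p)) \<le> K * real p powr (-(Re a - 1))
     \<and> (\<lambda>k. cc a k * LiStar_rev [(w, a + of_nat k)] p) sums
         ((1 - 1/w) * (if w = 1 then 0 else LiStar_rev [(w, a - 1)] p) + w^(p-1) / (of_nat p) powr (a - 1))"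
proof -
  define \<gamma> where "\<gamma> k = norm (cc a k) * (1/2)^k" for k
  have gs: "summable \<gamma>" using GAM unfolding \<gamma>_def .
  have g0: "\<gamma> k \<ge> 0" for k by (simp add: \<gamma>_def)
  define K0 where "K0 = 2 powr (Re a - 1)/(Re a - 1)"
  show ?thesis
  proof (intro exI[of _ "suminf \<gamma> * K0"] allI impI)
    fix p :: nat assume p: "p \<ge> 2"
    define Zp where "Zp = (\<Sum>n. real (n+p) powr (- Re a))"
    have Z: "summable (\<lambda>n. real (n+p) powr (- Re a))" "Zp \<le> K0 * real p powr (1 - Re a)"
      using ZB[of "Re a" p] a1 p unfolding Zp_def K0_def by auto
    have Zp0: "Zp \<ge> 0" unfolding Zp_def by (intro suminf_nonneg Z) simp
    define t where "t k n = w^(n+p) / (of_nat (n+p)) powr (a + of_nat k)" for k n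
    define v where "v k n = cc a k * t k n" for k n
    have tb: "norm (t k n) \<le> real (n+p) powr (- Re a) * (1/2)^k" for k n
    proof -
      have "norm (t k n) \<le> real (n+p) powr (- Re (a + of_nat k))"
        unfolding t_def by (rule term_bound) (use w1 p in auto)
      also have "\<dots> = real (n+p) powr (- Re a) * real (n+p) powr (- real k)"
        by (simp add: powr_add[symmetric])
      also have "\<dots> \<le> real (n+p) powr (- Re a) * (1/2)^k"
      proof (intro mult_left_mono)
        have "real (n+p) powr (- real k) = 1 / real (n+p) ^ k"
          using p by (simp add: powr_minus_divide powr_realpow)
        also have "\<dots> \<le> 1 / 2^k" using p by (intro divide_left_mono power_mono) auto
        finally show "real (n+p) powr (- real k) \<le> (1/2)^k" by (simp add: power_one_over)
      qed simp
      finally show ?thesis .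
    qed
    have tb': "norm (t k n) \<le> real (n+p) powr (- Re a)" for k n
      using tb[of k n] by (rule order_trans) (simp add: mult_right_le_one_le power_le_one)
    have ts: "summable (t k)" for k
      by (rule summable_norm_cancel, rule summable_comparison_test'[OF Z(1)]) (use tb' in simp)
    have vb: "norm (v k n) \<le> \<gamma> k * real (n+p) powr (- Re a)" for k n
    proof -
      have "norm (v k n) = norm (cc a k) * norm (t k n)" by (simp add: v_def norm_mult)
      also have "\<dots> \<le> norm (cc a k) * (real (n+p) powr (- Re a) * (1/2)^k)"
        by (intro mult_left_mono tb) simp
      finally show ?thesis by (simp add: \<gamma>_def mult_ac)
    qed
    have rs: "summable (\<lambda>n. norm (v k n))" for k
      by (rule summable_comparison_test'[where g="\<lambda>n. \<gamma> k * real (n+p) powr (- Re a)"])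
         (use vb Z in \<open>auto intro: summable_mult\<close>)
    have rb: "(\<Sum>n. norm (v k n)) \<le> \<gamma> k * Zp" for k
    proof -
      have "(\<Sum>n. norm (v k n)) \<le> (\<Sum>n. \<gamma> k * real (n+p) powr (- Re a))"
        by (rule suminf_le[OF vb rs]) (use Z in \<open>auto intro: summable_mult\<close>)
      also have "\<dots> = \<gamma> k * Zp" unfolding Zp_def by (rule suminf_mult[OF Z(1)])
      finally show ?thesis .
    qed
    have rn: "(\<Sum>n. norm (v k n)) \<ge> 0" for k by (intro suminf_nonneg rs) simp
    have A2: "summable (\<lambda>k. \<Sum>n. norm (v k n))"
      by (rule summable_comparison_test'[where g="\<lambda>k. \<gamma> k * Zp"])
         (use rb rn gs in \<open>auto intro: summable_mult2\<close>)
    have F: "(\<lambda>n. \<Sum>k. v k n) sums (\<Sum>k. \<Sum>n. v k n)"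
      using FUB[of v, OF rs A2] by auto
    have Fk: "(\<Sum>n. v k n) = cc a k * LiStar_rev [(w, a + of_nat k)] p" for k
    proof -
      have "(\<Sum>n. v k n) = cc a k * (\<Sum>n. t k n)" unfolding v_def by (rule suminf_mult[OF ts])
      moreover have "LiStar_rev [(w, a + of_nat k)] p = (\<Sum>n. t k n)" by (simp add: t_def)
      ultimately show ?thesis by simp
    qed
    have nb: "norm (cc a k * LiStar_rev [(w, a + of_nat k)] p) \<le> \<gamma> k * Zp" for k
      unfolding Fk[symmetric] by (rule order_trans[OF summable_norm[OF rs] rb])
    show sm: "summable (\<lambda>k. norm (cc a k * LiStar_rev [(w, a + of_nat k)] p))
     \<and> (\<Sum>k. norm (cc a k * LiStar_rev [(w, a + of_nat k)] p)) \<le> suminf \<gamma> * K0 * real p powr (-(Re a - 1))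
     \<and> (\<lambda>k. cc a k * LiStar_rev [(w, a + of_nat k)] p) sums
         ((1 - 1/w) * (if w = 1 then 0 else LiStar_rev [(w, a - 1)] p) + w^(p-1) / (of_nat p) powr (a - 1))"
    proof (intro conjI)
      show sm: "summable (\<lambda>k. norm (cc a k * LiStar_rev [(w, a + of_nat k)] p))"
        by (rule summable_comparison_test'[where g="\<lambda>k. \<gamma> k * Zp"]) (use nb gs in \<open>auto intro: summable_mult2\<close>)
      have "(\<Sum>k. norm (cc a k * LiStar_rev [(w, a + of_nat k)] p)) \<le> (\<Sum>k. \<gamma> k * Zp)"
        by (rule suminf_le[OF nb sm]) (use gs in \<open>auto intro: summable_mult2\<close>)
      also have "\<dots> = suminf \<gamma> * Zp" by (rule suminf_mult2[OF gs, symmetric])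
      also have "\<dots> \<le> suminf \<gamma> * (K0 * real p powr (1 - Re a))"
        by (intro mult_left_mono Z(2) suminf_nonneg gs g0)
      finally show "(\<Sum>k. norm (cc a k * LiStar_rev [(w, a + of_nat k)] p)) \<le> suminf \<gamma> * K0 * real p powr (-(Re a - 1))"
        by (simp add: mult.assoc)
      have S1: "(\<lambda>k. cc a k * LiStar_rev [(w, a + of_nat k)] p) sums (\<Sum>k. \<Sum>n. v k n)"
        unfolding Fk[symmetric] by (rule summable_sums, rule summable_norm_cancel) (use sm Fk in simp)
      have inner: "(\<Sum>k. v k n) = w^(n+p) * ((of_nat (n+p)) powr (1-a) - (of_nat (n+p) + 1) powr (1-a))" for n
      proof -
        have "(\<lambda>k. w^(n+p) * (cc a k / (of_nat (n+p)) powr (a + of_nat k))) sums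
              (w^(n+p) * ((of_nat (n+p)) powr (1-a) - (of_nat (n+p) + 1) powr (1-a)))"
          by (rule sums_mult, rule BIN) (use p in simp)
        moreover have "(\<lambda>k. w^(n+p) * (cc a k / (of_nat (n+p)) powr (a + of_nat k))) = (\<lambda>k. v k n)"
          by (simp add: v_def t_def mult.commute)
        ultimately show ?thesis by (simp add: sums_iff)
      qed
      have "(\<lambda>n. w^(n+p) * ((of_nat (n+p)) powr (1-a) - (of_nat (n+p) + 1) powr (1-a))) sums (\<Sum>k. \<Sum>n. v k n)"
        using F unfolding inner .
      then have "(\<Sum>k. \<Sum>n. v k n) = (1 - 1/w) * (if w = 1 then 0 else LiStar_rev [(w, a - 1)] p) + w^(p-1) / (of_nat p) powr (a - 1)"
        by (rule TELE[OF w1 w0 a1, rotated]) (use p in simp)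
      then show "(\<lambda>k. cc a k * LiStar_rev [(w, a + of_nat k)] p) sums
         ((1 - 1/w) * (if w = 1 then 0 else LiStar_rev [(w, a - 1)] p) + w^(p-1) / (of_nat p) powr (a - 1))"
        using S1 by simp
    qed
  qed
qed

lemma LB:
  assumes "\<forall>p\<in>set xs. norm (fst p) \<le> 1" "Q e xs" "\<And>m. m \<ge> 2 \<Longrightarrow> norm (f m) \<le> C * real m powr (-e)"
  shows "\<exists>C'. \<forall>m\<ge>2. norm (Lg xs f m) \<le> C' * real m powr (-(e + sR xs - real (length xs)))"
proof -
  define g where "g k = (if k = 0 then f else (\<lambda>p. 0))" for k :: nat
  have ng: "(\<lambda>k. norm (g k m)) = (\<lambda>k. if k = 0 then norm (f m) else 0)" for m by (auto simp: g_def)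
  have s1: "(\<lambda>k. norm (g k m)) sums norm (f m)" for m
    unfolding ng using sums_single[of 0 "\<lambda>_. norm (f m)"] by simp
  obtain C' where C': "\<forall>m\<ge>2. (\<lambda>k. Lg xs (g k) m) sums Lg xs (\<lambda>p. \<Sum>k. g k p) m
     \<and> summable (\<lambda>k. norm (Lg xs (g k) m))
     \<and> (\<Sum>k. norm (Lg xs (g k) m)) \<le> C' * real m powr (-(e + sR xs - real (length xs)))"
    using LX[OF assms(1,2), of g C] s1 assms(3) by (auto simp: sums_iff)
  show ?thesis
  proof (intro exI[of _ C'] allI impI)
    fix m :: nat assume m: "m \<ge> 2"
    have "norm (Lg xs f m) = (\<Sum>k\<in>{0}. norm (Lg xs (g k) m))" by (simp add: g_def)
    also have "\<dots> \<le> (\<Sum>k. norm (Lg xs (g k) m))" by (rule sum_le_suminf) (use C' m in auto)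
    also have "\<dots> \<le> C' * real m powr (-(e + sR xs - real (length xs)))" using C' m by auto
    finally show "norm (Lg xs f m) \<le> C' * real m powr (-(e + sR xs - real (length xs)))" .
  qed
qed

lemma LEVEL:
  assumes w: "norm w \<le> 1" and h: "\<And>p. p \<ge> 2 \<Longrightarrow> norm (h p) \<le> C * real p powr (-e1)"
    and s: "Re s + e1 > 1" and m: "m \<ge> 2"
  shows "summable (\<lambda>n. w^(n+m) / (of_nat (n+m)) powr s * h (n+m))"
proof (rule summable_norm_cancel, rule summable_comparison_test'[where g="\<lambda>n. max C 0 * real (n+m) powr (-(Re s + e1))"])
  show "summable (\<lambda>n. max C 0 * real (n+m) powr (-(Re s + e1)))"
    using ZB[of "Re s + e1" m] s m by (auto intro: summable_mult)
next
  fix n :: nat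
  have "norm (w^(n+m) / (of_nat (n+m)) powr s * h (n+m)) = norm (w^(n+m) / (of_nat (n+m)) powr s) * norm (h (n+m))"
    by (rule norm_mult)
  also have "\<dots> \<le> real (n+m) powr (- Re s) * (max C 0 * real (n+m) powr (-e1))"
  proof (intro mult_mono term_bound w)
    show "norm (h (n+m)) \<le> max C 0 * real (n+m) powr (-e1)"
      using h[of "n+m"] m by (rule_tac order_trans) (auto intro: mult_right_mono)
  qed (use m in auto)
  also have "\<dots> = max C 0 * real (n+m) powr (-(Re s + e1))"
    by (simp add: powr_add[symmetric] algebra_simps)
  finally show "norm (norm (w^(n+m) / (of_nat (n+m)) powr s * h (n+m))) \<le> max C 0 * real (n+m) powr (-(Re s + e1))"
    by simp
qed

lemma FS:
  assumes "norm w \<le> 1" "Re b > 1" "p \<ge> 2"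
  shows "summable (\<lambda>n. w^(n+p) / (of_nat (n+p)) powr b)"
  using LEVEL[of w "\<lambda>_. 1" 1 0 b p] assms by simp

lemma FB:
  assumes w: "norm w \<le> 1" and b: "Re b > 1"
  shows "\<exists>K. \<forall>p\<ge>2. norm (LiStar_rev [(w,b)] p) \<le> K * real p powr (-(Re b - 1))"
proof (intro exI[of _ "2 powr (Re b - 1) / (Re b - 1)"] allI impI)
  fix p :: nat assume p: "p \<ge> 2"
  have "norm (LiStar_rev [(w,b)] p) = norm (\<Sum>n. w^(n+p) / (of_nat (n+p)) powr b)" by simp
  also have "\<dots> \<le> (\<Sum>n. real (n+p) powr (- Re b))"
  proof (rule norm_suminf_le)
    fix n show "norm (w^(n+p) / (of_nat (n+p)) powr b) \<le> real (n+p) powr (- Re b)"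
      by (rule term_bound) (use w p in auto)
  qed (use ZB[of "Re b" p] b p in auto)
  also have "\<dots> \<le> 2 powr (Re b - 1) / (Re b - 1) * real p powr (1 - Re b)"
    using ZB[of "Re b" p] b p by auto
  finally show "norm (LiStar_rev [(w,b)] p) \<le> 2 powr (Re b - 1) / (Re b - 1) * real p powr (-(Re b - 1))"
    by simp
qed

lemma LINC:
  assumes "\<forall>p\<in>set xs. norm (fst p) \<le> 1" "Q e xs"
    and f: "\<And>m. m \<ge> 2 \<Longrightarrow> norm (f m) \<le> C * real m powr (-e)"
    and h: "\<And>m. m \<ge> 2 \<Longrightarrow> norm (h m) \<le> C * real m powr (-e)"
    and "m \<ge> 2"
  shows "Lg xs (\<lambda>p. c * f p + d * h p) m = c * Lg xs f m + d * Lg xs h m"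
  using assms(1,2,5)
proof (induction xs arbitrary: m)
  case Nil then show ?case by simp
next
  case (Cons x ys)
  obtain w s where x: "x = (w,s)" by fastforce
  have w1: "norm w \<le> 1" and Qys: "Q e ys" and sg: "Re s + (e + sR ys - real (length ys)) > 1"
    and ny: "\<forall>p\<in>set ys. norm (fst p) \<le> 1" using Cons.prems x by auto
  obtain Cf where Cf: "\<forall>m\<ge>2. norm (Lg ys f m) \<le> Cf * real m powr (-(e + sR ys - real (length ys)))"
    using LB[OF ny Qys f] by blast
  obtain Ch where Ch: "\<forall>m\<ge>2. norm (Lg ys h m) \<le> Ch * real m powr (-(e + sR ys - real (length ys)))"
    using LB[OF ny Qys h] by blast
  define a where "a n = w^(n+m) / (of_nat (n+m)) powr s" for n
  have sf: "summable (\<lambda>n. a n * Lg ys f (n+m))"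
    unfolding a_def by (rule LEVEL[OF w1 _ sg Cons.prems(3)]) (use Cf in auto)
  have sh: "summable (\<lambda>n. a n * Lg ys h (n+m))"
    unfolding a_def by (rule LEVEL[OF w1 _ sg Cons.prems(3)]) (use Ch in auto)
  have IH: "Lg ys (\<lambda>p. c * f p + d * h p) (n+m) = c * Lg ys f (n+m) + d * Lg ys h (n+m)" for n
    using Cons.IH[of "n+m"] ny Qys Cons.prems(3) by auto
  have "Lg (x#ys) (\<lambda>p. c * f p + d * h p) m = (\<Sum>n. c * (a n * Lg ys f (n+m)) + d * (a n * Lg ys h (n+m)))"
    by (simp add: x a_def IH algebra_simps)
  also have "\<dots> = (\<Sum>n. c * (a n * Lg ys f (n+m))) + (\<Sum>n. d * (a n * Lg ys h (n+m)))"
    by (rule suminf_add[symmetric]) (auto intro: summable_mult sf sh)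
  also have "\<dots> = c * (\<Sum>n. a n * Lg ys f (n+m)) + d * (\<Sum>n. a n * Lg ys h (n+m))"
    using suminf_mult[OF sf, of c] suminf_mult[OF sh, of d] by simp
  also have "\<dots> = c * Lg (x#ys) f m + d * Lg (x#ys) h m" by (simp add: x a_def)
  finally show ?case .
qed

lemma sR_append: "sR (xs @ ys) = sR xs + sR ys"
  by (induction xs rule: sR.induct) auto

lemma Q_snoc: "Q e (xs @ [(w,s)]) \<longleftrightarrow> (e + Re s > 1 \<and> Q (e + Re s - 1) xs)"
  by (induction xs rule: sR.induct) (auto simp: sR_append algebra_simps)

lemma Q_mono: "Q e xs \<Longrightarrow> e \<le> e' \<Longrightarrow> Q e' xs"
  by (induction xs rule: sR.induct) auto

lemma Q_rev:
  assumes "\<forall>i. 1 \<le> i \<and> i \<le> length L \<longrightarrow> e + (\<Sum>j<i. Re (snd (L ! j))) > real i"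
  shows "Q e (rev L)"
  using assms
proof (induction L arbitrary: e)
  case Nil then show ?case by simp
next
  case (Cons x L)
  obtain w s where x: "x = (w,s)" by fastforce
  have h1: "e + Re s > 1" using Cons.prems[rule_format, of 1] x by simp
  have "Q (e + Re s - 1) (rev L)"
  proof (rule Cons.IH, intro allI impI)
    fix i assume i: "1 \<le> i \<and> i \<le> length L"
    have "e + (\<Sum>j<Suc i. Re (snd ((x#L) ! j))) > real (Suc i)"
      using Cons.prems[rule_format, of "Suc i"] i by simp
    moreover have "(\<Sum>j<Suc i. Re (snd ((x#L) ! j))) = Re s + (\<Sum>j<i. Re (snd (L ! j)))"
      by (simp only: sum.lessThan_Suc_shift) (simp add: x)
    ultimately show "e + Re s - 1 + (\<Sum>j<i. Re (snd (L ! j))) > real i"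
      by simp
  qed
  then show ?case using h1 x by (simp add: Q_snoc)
qed

lemma two_cons: "2 \<le> length xs \<Longrightarrow> \<exists>x y zr. xs = x # y # zr"
  apply (cases xs)
   apply simp
  apply (rename_tac u us)
  apply (case_tac us)
   apply auto
  done

lemma one_cons: "length xs = 1 \<Longrightarrow> \<exists>x. xs = [x]"
  by (cases xs) auto

theorem proposition1:
  fixes N r :: nat and z s :: "complex list"
  assumes "N \<ge> 2" and "r \<ge> 1"
    and "length z = r" and "length s = r"
    and "\<forall>i<r. norm (z ! i) \<le> 1"
    and "z ! 0 \<noteq> 0"
    and "U_dom s"
  shows "(r = 1 \<longrightarrow>
           (\<lambda>k. (-1) ^ k * pochhammer (s ! 0 - 1) (k + 1) / fact (k + 1)
                  * LiStar [z ! 0] [s ! 0 + of_nat k] N)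
           sums ((1 - 1 / z ! 0) * (if z ! 0 = 1 then 0 else LiStar [z ! 0] [s ! 0 - 1] N)
                 + (z ! 0) ^ (N - 1) / (of_nat N) powr (s ! 0 - 1)))
       \<and> (r > 1 \<longrightarrow>
           (\<lambda>k. (-1) ^ k * pochhammer (s ! 0 - 1) (k + 1) / fact (k + 1)
                  * LiStar z ((s ! 0 + of_nat k) # tl s) N)
           sums ((1 - 1 / z ! 0) * (if z ! 0 = 1 then 0 else LiStar z ((s ! 0 - 1) # tl s) N)
                 + 1 / z ! 0 * LiStar ((z ! 0 * z ! 1) # drop 2 z) ((s ! 0 + s ! 1 - 1) # drop 2 s) N))"
proof -
  have N2: "N \<ge> 2" by fact
  have zs: "\<forall>x\<in>set z. norm x \<le> 1" using assms(3,5) by (auto simp: in_set_conv_nth)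
  have Ud: "\<And>i. 1 \<le> i \<Longrightarrow> i \<le> r \<Longrightarrow> Re (\<Sum>j<i. s!j) > real i"
    using assms(7,4) unfolding U_dom_def by auto
  have a1: "Re (s!0) > 1" using Ud[of 1] assms(2) by simp
  have w1: "norm (z!0) \<le> 1" using assms(5,2) by simp
  have w0: "z!0 \<noteq> 0" by fact
  obtain K where K: "\<forall>p\<ge>2. summable (\<lambda>k. norm (cc (s!0) k * LiStar_rev [(z!0, s!0 + of_nat k)] p))
     \<and> (\<Sum>k. norm (cc (s!0) k * LiStar_rev [(z!0, s!0 + of_nat k)] p)) \<le> K * real p powr (-(Re (s!0) - 1))
     \<and> (\<lambda>k. cc (s!0) k * LiStar_rev [(z!0, s!0 + of_nat k)] p) sums
         ((1 - 1/z!0) * (if z!0 = 1 then 0 else LiStar_rev [(z!0, s!0 - 1)] p) + (z!0)^(p-1) / (of_nat p) powr (s!0 - 1))"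
    using ONE[OF w1 w0 a1] by blast
  show ?thesis
  proof (intro conjI impI)
    assume r: "r = 1"
    obtain x where z: "z = [x]" using one_cons[of z] assms(3) r by auto
    obtain b where s: "s = [b]" using one_cons[of s] assms(4) r by auto
    show "(\<lambda>k. (-1) ^ k * pochhammer (s ! 0 - 1) (k + 1) / fact (k + 1)
                  * LiStar [z ! 0] [s ! 0 + of_nat k] N)
           sums ((1 - 1 / z ! 0) * (if z ! 0 = 1 then 0 else LiStar [z ! 0] [s ! 0 - 1] N)
                 + (z ! 0) ^ (N - 1) / (of_nat N) powr (s ! 0 - 1))"
    proof -
      have L1: "LiStar [x] [c] N = LiStar_rev [(x,c)] N" for c by (simp add: LiStar_def)
      have zx: "z!0 = x" "s!0 = b" by (simp_all add: z s)
      have "(\<lambda>k. cc b k * LiStar_rev [(x, b + of_nat k)] N) sums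
         ((1 - 1/x) * (if x = 1 then 0 else LiStar_rev [(x, b - 1)] N) + x^(N-1) / (of_nat N) powr (b - 1))"
        using K N2 unfolding zx by auto
      then show ?thesis unfolding z s by (simp only: nth_Cons_0 L1 cc_def)
    qed
  next
    assume r: "r > 1"
    obtain x y zr where z: "z = x # y # zr" using two_cons[of z] assms(3) r by auto
    obtain b0 b1 sr where s: "s = b0 # b1 # sr" using two_cons[of s] assms(4) r by auto
    define O1 where "O1 = rev (zip (y#zr) (b1#sr))"
    define O2 where "O2 = rev (zip zr sr)"
    have O1O: "O1 = O2 @ [(y,b1)]" by (simp add: O1_def O2_def)
    have E1: "LiStar z (b # tl s) N = Lg O1 (LiStar_rev [(x,b)]) N" for b
      using LiStar_rev_append[of O1 x b] by (simp add: LiStar_def z s O1_def)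
    have E3: "LiStar ((x*y) # zr) (c # sr) N = Lg O2 (LiStar_rev [(x*y,c)]) N" for c
      by (simp add: LiStar_def O2_def LiStar_rev_append)
    have nO1: "\<forall>p\<in>set O1. norm (fst p) \<le> 1"
      using zs unfolding O1_def z by (auto dest!: set_zip_leftD)
    have nO: "\<forall>p\<in>set O2. norm (fst p) \<le> 1" using nO1 O1O by auto
    define e where "e = Re b0 - 1"
    have QO1: "Q e O1"
      unfolding O1_def
    proof (rule Q_rev, intro allI impI)
      fix i assume i: "1 \<le> i \<and> i \<le> length (zip (y#zr) (b1#sr))"
      have lz: "length (y#zr) = length (b1#sr)" using assms(3,4) z s by simp
      have h1: "Re (\<Sum>j<Suc i. s!j) > real (Suc i)" using Ud[of "Suc i"] i lz assms(4) s by simp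
      have h2: "(\<Sum>j<Suc i. s!j) = b0 + (\<Sum>j<i. (b1#sr)!j)"
        by (simp only: sum.lessThan_Suc_shift) (simp add: s)
      have h3: "Re b0 + Re (\<Sum>j<i. (b1#sr)!j) > real (Suc i)" using h1 unfolding h2 by (simp only: plus_complex.sel)
      have h4: "(\<Sum>j<i. Re (snd (zip (y#zr) (b1#sr) ! j))) = Re (\<Sum>j<i. (b1#sr)!j)"
      proof -
        have nz: "snd (zip (y#zr) (b1#sr) ! j) = (b1#sr)!j" if "j < i" for j
          using i lz that by (subst nth_zip) auto
        show ?thesis unfolding Re_sum
          apply (rule sum.cong[OF refl])
          apply (subst nz)
           apply auto
          done
      qed
      show "e + (\<Sum>j<i. Re (snd (zip (y#zr) (b1#sr) ! j))) > real i"
        unfolding h4 e_def using h3 by simp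
    qed
    have a0: "s!0 = b0" "z!0 = x" "z!1 = y" "s!1 = b1" "tl s = b1 # sr" "drop 2 z = zr" "drop 2 s = sr"
      by (simp_all add: s z)
    have x0: "x \<noteq> 0" using w0 a0 by simp
    have x1: "norm x \<le> 1" using w1 a0 by simp
    have y1: "norm y \<le> 1" using zs z by simp
    have b01: "Re (b0 + b1 - 1) > 1"
    proof -
      have "Re (\<Sum>j<2. s!j) > 2" using Ud[of 2] r by simp
      then show ?thesis by (simp add: s numeral_2_eq_2)
    qed
    define g where "g k p = cc b0 k * LiStar_rev [(x, b0 + of_nat k)] p" for k p
    have Kb: "\<forall>p\<ge>2. summable (\<lambda>k. norm (g k p))
     \<and> (\<Sum>k. norm (g k p)) \<le> K * real p powr (- e)
     \<and> (\<lambda>k. g k p) sums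
         ((1 - 1/x) * (if x = 1 then 0 else LiStar_rev [(x, b0 - 1)] p) + x^(p-1) / (of_nat p) powr (b0 - 1))"
      using K unfolding a0 g_def e_def by simp
    obtain C' where C': "\<forall>m\<ge>2. (\<lambda>k. Lg O1 (g k) m) sums Lg O1 (\<lambda>p. \<Sum>k. g k p) m
       \<and> summable (\<lambda>k. norm (Lg O1 (g k) m))
       \<and> (\<Sum>k. norm (Lg O1 (g k) m)) \<le> C' * real m powr (-(e + sR O1 - real (length O1)))"
      using LX[OF nO1 QO1, of g K] Kb by auto
    have MAIN: "(\<lambda>k. Lg O1 (g k) N) sums Lg O1 (\<lambda>p. \<Sum>k. g k p) N" using C' N2 by auto
    have I: "Lg O1 (g k) N = cc b0 k * LiStar z ((s!0 + of_nat k) # tl s) N" for k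
    proof -
      define f where "f = LiStar_rev [(x, b0 + of_nat k)]"
      obtain Kf where Kf: "\<forall>p\<ge>2. norm (f p) \<le> Kf * real p powr (-(Re (b0 + of_nat k) - 1))"
        using FB[OF x1, of "b0 + of_nat k"] a1 a0 unfolding f_def by auto
      have Q1: "Q (Re (b0 + of_nat k) - 1) O1" by (rule Q_mono[OF QO1]) (simp add: e_def)
      have "Lg O1 (\<lambda>p. cc b0 k * f p + 0 * f p) N = cc b0 k * Lg O1 f N + 0 * Lg O1 f N"
        by (rule LINC[OF nO1 Q1]) (use Kf N2 in auto)
      moreover have "(\<lambda>p. cc b0 k * f p + 0 * f p) = g k" by (auto simp: g_def f_def)
      ultimately show ?thesis using E1[of "b0 + of_nat k"] by (simp add: f_def a0)
    qed
    define A' where "A' p = (1 - 1/x) * (if x = 1 then 0 else LiStar_rev [(x, b0 - 1)] p)" for p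
    define B where "B p = x^(p-1) / (of_nat p) powr (b0 - 1)" for p
    define C where "C = max K 0 + 1"
    have Bb: "norm (B p) \<le> C * real p powr (- e)" if p: "p \<ge> 2" for p
    proof -
      have "norm (x^(p-1)) \<le> 1" using x1 by (simp add: norm_power power_le_one)
      moreover have "norm ((of_nat p :: complex) powr (b0 - 1)) = real p powr (Re b0 - 1)"
        by (subst norm_powr_real_powr) auto
      ultimately have "norm (B p) \<le> 1 / real p powr (Re b0 - 1)"
        unfolding B_def by (simp add: norm_divide divide_right_mono)
      also have "\<dots> = 1 * real p powr (- e)" using powr_minus_divide[of "real p" "Re b0 - 1"] by (simp add: e_def)
      also have "\<dots> \<le> C * real p powr (- e)" by (intro mult_right_mono) (auto simp: C_def)
      finally show ?thesis .
    qed
    have Bb1: "norm (B p) \<le> real p powr (- e)" if p: "p \<ge> 2" for p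
    proof -
      have "norm (x^(p-1)) \<le> 1" using x1 by (simp add: norm_power power_le_one)
      moreover have "norm ((of_nat p :: complex) powr (b0 - 1)) = real p powr (Re b0 - 1)"
        by (subst norm_powr_real_powr) auto
      ultimately have "norm (B p) \<le> 1 / real p powr (Re b0 - 1)"
        unfolding B_def by (simp add: norm_divide divide_right_mono)
      also have "\<dots> = real p powr (- e)" using powr_minus_divide[of "real p" "Re b0 - 1"] by (simp add: e_def)
      finally show ?thesis .
    qed
    have sumg: "(\<Sum>k. g k p) = A' p + B p" if "p \<ge> 2" for p
      using Kb that unfolding A'_def B_def by (auto simp: sums_iff)
    have Ab: "norm (A' p) \<le> C * real p powr (- e)" if p: "p \<ge> 2" for p
    proof -
      have "norm (\<Sum>k. g k p) \<le> (\<Sum>k. norm (g k p))" using Kb p by (auto intro: summable_norm)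
      also have "\<dots> \<le> K * real p powr (- e)" using Kb p by auto
      finally have "norm (\<Sum>k. g k p) \<le> K * real p powr (- e)" .
      moreover have "A' p = (\<Sum>k. g k p) - B p" using sumg[OF p] by simp
      ultimately have "norm (A' p) \<le> K * real p powr (- e) + real p powr (- e)"
        using Bb1[OF p] norm_triangle_ineq4[of "\<Sum>k. g k p" "B p"] by simp
      also have "\<dots> \<le> C * real p powr (- e)"
        by (simp add: C_def distrib_right mult_right_mono)
      finally show ?thesis .
    qed
    have II: "Lg O1 (\<lambda>p. \<Sum>k. g k p) N = Lg O1 A' N + Lg O1 B N"
    proof -
      have "Lg O1 (\<lambda>p. \<Sum>k. g k p) N = Lg O1 (\<lambda>p. 1 * A' p + 1 * B p) N"
        by (rule Lg_cong) (use sumg N2 in auto)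
      also have "\<dots> = 1 * Lg O1 A' N + 1 * Lg O1 B N"
        by (rule LINC[OF nO1 QO1]) (use Ab Bb N2 in auto)
      finally show ?thesis by simp
    qed
    have III: "Lg O1 A' N = (1 - 1/x) * (if x = 1 then 0 else LiStar z ((s!0 - 1) # tl s) N)"
    proof (cases "x = 1")
      case True
      then have "A' = (\<lambda>p. 0)" by (auto simp: A'_def)
      then show ?thesis using True by (simp add: Lg_zero)
    next
      case False
      define F where "F = LiStar_rev [(x, b0 - 1)]"
      have nz: "1 - 1/x \<noteq> 0" using False x0 by (simp add: field_simps)
      have AF: "A' = (\<lambda>p. (1 - 1/x) * F p + 0 * F p)" using False by (auto simp: A'_def F_def)
      have Fb: "norm (F p) \<le> (C / norm (1 - 1/x)) * real p powr (- e)" if p: "p \<ge> 2" for p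
      proof -
        have "norm (A' p) = norm (1 - 1/x) * norm (F p)" by (simp add: AF norm_mult)
        then show ?thesis using Ab[OF p] nz by (simp add: field_simps)
      qed
      have "Lg O1 (\<lambda>p. (1 - 1/x) * F p + 0 * F p) N = (1 - 1/x) * Lg O1 F N + 0 * Lg O1 F N"
        by (rule LINC[OF nO1 QO1, where C="C / norm (1 - 1/x)"]) (use Fb N2 in auto)
      then show ?thesis using E1[of "b0 - 1"] False by (simp add: AF F_def a0)
    qed
    have IV: "Lg O1 B N = 1 / x * LiStar ((z!0 * z!1) # drop 2 z) ((s!0 + s!1 - 1) # drop 2 s) N"
    proof -
      define F' where "F' = LiStar_rev [(x*y, b0 + b1 - 1)]"
      have xy1: "norm (x*y) \<le> 1" using x1 y1 by (simp add: norm_mult mult_le_one)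
      have pt: "Lg [(y,b1)] B q = 1/x * F' q" if q: "q \<ge> 2" for q
      proof -
        have eqt: "y^(n+q) / (of_nat (n+q)) powr b1 * B (n+q) = 1/x * ((x*y)^(n+q) / (of_nat (n+q)) powr (b0 + b1 - 1))" for n
        proof -
          have xp: "x^(n+q) = x * x^(n+q-1)" using q by (metis Suc_diff_1 add_gr_0 less_le_trans pos2 power_Suc)
          have pw: "(of_nat (n+q) :: complex) powr (b0 + b1 - 1) = (of_nat (n+q)) powr b1 * (of_nat (n+q)) powr (b0 - 1)"
            using powr_add[of "of_nat (n+q) :: complex" b1 "b0 - 1"] by (simp add: algebra_simps)
          have nz1: "(of_nat (n+q) :: complex) powr b1 \<noteq> 0" and nz2: "(of_nat (n+q) :: complex) powr (b0 - 1) \<noteq> 0"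
          proof -
            have qn: "(of_nat (n+q) :: complex) \<noteq> 0" using q by (simp only: of_nat_eq_0_iff)
            show "(of_nat (n+q) :: complex) powr b1 \<noteq> 0" "(of_nat (n+q) :: complex) powr (b0 - 1) \<noteq> 0"
              using qn unfolding powr_def by auto
          qed
          show ?thesis unfolding B_def pw using x0 nz1 nz2 by (simp add: xp power_mult_distrib field_simps)
        qed
        have "Lg [(y,b1)] B q = (\<Sum>n. y^(n+q) / (of_nat (n+q)) powr b1 * B (n+q))" by simp
        also have "\<dots> = (\<Sum>n. 1/x * ((x*y)^(n+q) / (of_nat (n+q)) powr (b0 + b1 - 1)))" by (simp only: eqt)
        also have "\<dots> = 1/x * F' q" unfolding F'_def
          using suminf_mult[OF FS[OF xy1 b01 q], of "1/x"] by simp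
        finally show ?thesis .
      qed
      define e2 where "e2 = Re (b0 + b1 - 1) - 1"
      have QO: "Q e2 O2" using QO1 unfolding O1O Q_snoc by (simp add: e_def e2_def)
      obtain KF where KF: "\<forall>p\<ge>2. norm (F' p) \<le> KF * real p powr (-(Re (b0 + b1 - 1) - 1))"
        using FB[OF xy1 b01] unfolding F'_def by auto
      have "Lg O1 B N = Lg O2 (Lg [(y,b1)] B) N" by (simp add: O1O Lg_append)
      also have "\<dots> = Lg O2 (\<lambda>q. 1/x * F' q + 0 * F' q) N"
        by (rule Lg_cong) (use pt N2 in auto)
      also have "\<dots> = 1/x * Lg O2 F' N + 0 * Lg O2 F' N"
        by (rule LINC[OF nO QO]) (use KF N2 in \<open>auto simp: e2_def\<close>)
      finally show ?thesis using E3[of "b0 + b1 - 1"] by (simp add: F'_def z s)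
    qed
    have "(\<lambda>k. cc b0 k * LiStar z ((s!0 + of_nat k) # tl s) N) sums
      ((1 - 1/x) * (if x = 1 then 0 else LiStar z ((s!0 - 1) # tl s) N)
        + 1 / x * LiStar ((z!0 * z!1) # drop 2 z) ((s!0 + s!1 - 1) # drop 2 s) N)"
      using MAIN unfolding I II III IV .
    then show "(\<lambda>k. (-1) ^ k * pochhammer (s ! 0 - 1) (k + 1) / fact (k + 1)
                  * LiStar z ((s ! 0 + of_nat k) # tl s) N)
           sums ((1 - 1 / z ! 0) * (if z ! 0 = 1 then 0 else LiStar z ((s ! 0 - 1) # tl s) N)
                 + 1 / z ! 0 * LiStar ((z ! 0 * z ! 1) # drop 2 z) ((s ! 0 + s ! 1 - 1) # drop 2 s) N)"
      by (simp only: a0 cc_def)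
  qed
qed

end
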